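(* Let $f:\mathbb{R}^d\to\mathbb{R}$ be $C^3$, $1\le k\le d-1$, $\mathbf{x}^*$ a critical point of $f$, and suppose there exist $\delta>0$, $L>\mu>0$, $M>0$ such that for all $\mathbf{x}$ with $\|\mathbf{x}-\mathbf{x}^*\|_2\le\delta$ the eigenvalues of $\nabla^2 f(\mathbf{x})$ satisfy $-L<\lambda_1\le\dots\le\lambda_k<-\mu<0<\mu<\lambda_{k+1}\le\dots\le\lambda_d<L$ and $\nabla^2 f$ is $M$-Lipschitz on that ball. Let $\theta>0$ be small enough that $C(\theta):=(1-\sqrt{\theta})\mu-L\theta-5L\sqrt{\theta}>0$, let $\alpha(n)<\frac{1}{2\mu}$, and let $U=\{\mathbf{x}:\|\mathbf{x}-\mathbf{x}^*\|_2\le\min(C(\theta)/M,\delta)\}$. Consider $\mathbf{x}(n+1)=\mathbf{x}(n)-\alpha(n)\mathcal{P}_{\tilde V}\nabla f(\mathbf{x}(n);\omega(n))$ with $\mathcal{P}_{\tilde V}=I-2\sum_{i=1}^k\tilde{\mathbf{v}}_i\tilde{\mathbf{v}}_i^\top$, where $\tilde{\mathbf{v}}_1,\dots,\tilde{\mathbf{v}}_k$ are orthonormal with $\|\sum_{i=1}^k\tilde{\mathbf{v}}_i\tilde{\mathbf{v}}_i^\top-\sum_{i=1}^k\mathbf{v}_i\mathbf{v}_i^\top\|_2^2\le\theta$, $\mathbf{v}_1,\dots,\mathbf{v}_k$ being orthonormal eigenvectors of $\nabla^2 f(\mathbf{x}(n))$ for its $k$ smallest eigenvalues. If $\mathbf{x}(n)\in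 U$, then $$\tfrac12\|\mathbf{x}(n+1)-\mathbf{x}^*\|_2^2\le(1-\alpha(n)C(\theta))\tfrac12\|\mathbf{x}(n)-\mathbf{x}^*\|_2^2+\alpha(n)\psi(n)+\tfrac12\alpha(n)^2\|\nabla f(\mathbf{x}(n);\omega(n))\|_2^2,$$ where $\psi(n)=-\langle\mathcal{P}_{\tilde V}(\nabla f(\mathbf{x}(n);\omega(n))-\nabla f(\mathbf{x}(n))),\mathbf{x}(n)-\mathbf{x}^*\rangle$ is a martingale difference sequence with zero (conditional) expectation.
   Context: $\nabla f(\mathbf{x};\omega)$ is a stochastic gradient with $\omega$ from a probability space satisfying $\mathbb{E}\,\nabla f(\mathbf{x};\omega)=\nabla f(\mathbf{x})$; $\omega(n)$ is a fresh sample independent of the past iterates and of the vectors $\tilde{\mathbf{v}}_i$ used at step $n$. *)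

theory Defs
  imports "HOL-Analysis.Analysis" "HOL-Probability.Probability"
begin

definition outer :: "real^'n \<Rightarrow> real^'n \<Rightarrow> real^'n^'n" where
  "outer u v = (\<chi> i j. u$i * v$j)"

definition opnorm :: "real^'n^'m \<Rightarrow> real" where
  "opnorm A = onorm (\<lambda>x. A *v x)"

definition orthonormal_family :: "nat \<Rightarrow> (nat \<Rightarrow> real^'n) \<Rightarrow> bool" where
  "orthonormal_family m u \<longleftrightarrow>
     (\<forall>i<m. \<forall>j<m. u i \<bullet> u j = (if i = j then 1 else 0))"

text \<open>lam 0 <= ... <= lam (d-1) are the eigenvalues of A (with multiplicity),
  u 0, ..., u (d-1) a corresponding orthonormal eigenbasis, d = CARD('n).\<close>
definition sorted_eigensystem :: "real^'n^'n \<Rightarrow> (nat \<Rightarrow> real) \<Rightarrow> (nat \<Rightarrow> real^'n) \<Rightarrow> bool" where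
  "sorted_eigensystem A lam u \<longleftrightarrow>
     orthonormal_family CARD('n) u \<and>
     (\<forall>i<CARD('n). A *v u i = lam i *\<^sub>R u i) \<and>
     (\<forall>i j. i \<le> j \<and> j < CARD('n) \<longrightarrow> lam i \<le> lam j)"

definition reflector :: "nat \<Rightarrow> (nat \<Rightarrow> real^'n) \<Rightarrow> real^'n^'n" where
  "reflector k vt = mat 1 - 2 *\<^sub>R (\<Sum>i<k. outer (vt i) (vt i))"

definition Cth :: "real \<Rightarrow> real \<Rightarrow> real \<Rightarrow> real" where
  "Cth \<mu> L \<theta> = (1 - sqrt \<theta>) * \<mu> - L * \<theta> - 5 * L * sqrt \<theta>"

end

theory Submission
  imports Defs
begin

lemma outer_mv: "outer u w *v y = (w \<bullet> y) *\<^sub>R u"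
  by (simp add: vec_eq_iff outer_def matrix_vector_mult_def inner_vec_def sum_distrib_left mult_ac)

lemma sum_mv: "(\<Sum>i\<in>S. A i) *v (y::real^'n) = (\<Sum>i\<in>S. A i *v y)"
proof (induction S rule: infinite_finite_induct)
  case (insert x F) then show ?case by (simp add: matrix_vector_mult_add_rdistrib)
qed auto

lemma reflector_mv: "reflector k u *v y = y - 2 *\<^sub>R (\<Sum>i<k. (u i \<bullet> y) *\<^sub>R u i)"
  by (simp add: reflector_def matrix_vector_mult_diff_rdistrib sum_mv outer_mv
       scaleR_matrix_vector_assoc[symmetric])

lemma ortho_inner_sum:
  assumes "orthonormal_family m u" "j < m"
  shows "u j \<bullet> (\<Sum>i<m. a i *\<^sub>R u i) = a j"
proof -
  have "u j \<bullet> (\<Sum>i<m. a i *\<^sub>R u i) = (\<Sum>i<m. a i * (u j \<bullet> u i))"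
    by (simp add: inner_sum_right)
  also have "\<dots> = (\<Sum>i<m. if i = j then a i else 0)"
    using assms by (intro sum.cong) (auto simp: orthonormal_family_def)
  also have "\<dots> = a j" using assms by simp
  finally show ?thesis .
qed

lemma ortho_norm_sum:
  assumes "orthonormal_family m u"
  shows "(norm (\<Sum>i<m. a i *\<^sub>R u i))\<^sup>2 = (\<Sum>i<m. (a i)\<^sup>2)"
proof -
  have "(norm (\<Sum>i<m. a i *\<^sub>R u i))\<^sup>2 = (\<Sum>i<m. a i *\<^sub>R u i) \<bullet> (\<Sum>i<m. a i *\<^sub>R u i)"
    by (simp add: power2_norm_eq_inner)
  also have "\<dots> = (\<Sum>j<m. a j * (u j \<bullet> (\<Sum>i<m. a i *\<^sub>R u i)))"
    by (simp add: inner_sum_left)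
  also have "\<dots> = (\<Sum>j<m. (a j)\<^sup>2)"
    using ortho_inner_sum[OF assms] by (simp add: power2_eq_square)
  finally show ?thesis .
qed

lemma expand:
  fixes u :: "nat \<Rightarrow> real^'n"
  assumes on: "orthonormal_family CARD('n) u"
  shows "x = (\<Sum>i<CARD('n). (x \<bullet> u i) *\<^sub>R u i)"
proof (rule ccontr)
  define y where "y = x - (\<Sum>i<CARD('n). (x \<bullet> u i) *\<^sub>R u i)"
  assume "x \<noteq> (\<Sum>i<CARD('n). (x \<bullet> u i) *\<^sub>R u i)"
  then have y0: "y \<noteq> 0" by (simp add: y_def)
  have yu: "y \<bullet> u j = 0" if "j < CARD('n)" for j
  proof -
    have "u j \<bullet> y = u j \<bullet> x - x \<bullet> u j"
      using ortho_inner_sum[OF on that, of "\<lambda>i. x \<bullet> u i"] by (simp add: y_def inner_diff_right)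
    then show ?thesis by (simp add: inner_commute)
  qed
  have uu: "u i \<bullet> u j = (if i = j then 1 else 0)" if "i < CARD('n)" "j < CARD('n)" for i j
    using on that by (simp add: orthonormal_family_def)
  define S where "S = insert y (u ` {..<CARD('n)})"
  have inj: "inj_on u {..<CARD('n)}"
    by (rule inj_onI) (metis lessThan_iff uu zero_neq_one)
  have ynot: "y \<notin> u ` {..<CARD('n)}"
    using yu uu by (auto simp: inner_commute) (metis inner_commute uu zero_neq_one)
  have "pairwise orthogonal S"
    unfolding S_def pairwise_def orthogonal_def
    using yu uu by (auto simp: inner_commute)
  moreover have "0 \<notin> S" using y0 uu by (auto simp: S_def) (metis inner_zero_left uu zero_neq_one)
  ultimately have "independent S" by (rule pairwise_orthogonal_independent)
  then have "card S \<le> CARD('n)" using independent_bound by fastforce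
  moreover have "card S = CARD('n) + 1"
    using ynot inj by (simp add: S_def card_image)
  ultimately show False by simp
qed

lemma mv_sum: "(A::real^'n^'m) *v (\<Sum>i\<in>S. f i) = (\<Sum>i\<in>S. A *v f i)"
proof (induction S rule: infinite_finite_induct)
  case (insert x F) then show ?case by (simp add: matrix_vector_right_distrib)
qed auto

lemma eig_norm2:
  fixes u :: "nat \<Rightarrow> real^'n"
  assumes on: "orthonormal_family CARD('n) u"
  shows "(norm x)\<^sup>2 = (\<Sum>i<CARD('n). (x \<bullet> u i)\<^sup>2)"
  by (subst expand[OF on, of x]) (rule ortho_norm_sum[OF on])

lemma eig_mv:
  fixes u :: "nat \<Rightarrow> real^'n"
  assumes on: "orthonormal_family CARD('n) u"
    and ev: "\<forall>i<CARD('n). A *v u i = lam i *\<^sub>R u i"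
  shows "A *v x = (\<Sum>i<CARD('n). (lam i * (x \<bullet> u i)) *\<^sub>R u i)"
proof -
  have "A *v x = A *v (\<Sum>i<CARD('n). (x \<bullet> u i) *\<^sub>R u i)"
    by (subst expand[OF on, of x]) simp
  also have "\<dots> = (\<Sum>i<CARD('n). (lam i * (x \<bullet> u i)) *\<^sub>R u i)"
    by (simp add: mv_sum matrix_vector_mult_scaleR ev mult_ac)
  finally show ?thesis .
qed

lemma eig_quad:
  fixes u :: "nat \<Rightarrow> real^'n"
  assumes on: "orthonormal_family CARD('n) u"
    and ev: "\<forall>i<CARD('n). A *v u i = lam i *\<^sub>R u i"
  shows "x \<bullet> (A *v x) = (\<Sum>i<CARD('n). lam i * (x \<bullet> u i)\<^sup>2)"
  by (simp add: eig_mv[OF on ev] inner_sum_right power2_eq_square mult_ac)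

lemma eig_norm_mv2:
  fixes u :: "nat \<Rightarrow> real^'n"
  assumes on: "orthonormal_family CARD('n) u"
    and ev: "\<forall>i<CARD('n). A *v u i = lam i *\<^sub>R u i"
  shows "(norm (A *v x))\<^sup>2 = (\<Sum>i<CARD('n). (lam i * (x \<bullet> u i))\<^sup>2)"
  by (simp add: eig_mv[OF on ev] ortho_norm_sum[OF on])

lemma inertia:
  fixes u u' :: "nat \<Rightarrow> real^'n"
  assumes on: "orthonormal_family CARD('n) u"
    and ev: "\<forall>i<CARD('n). A *v u i = lam i *\<^sub>R u i"
    and on': "orthonormal_family CARD('n) u'"
    and ev': "\<forall>i<CARD('n). A *v u' i = lam' i *\<^sub>R u' i"
    and I: "I \<subseteq> {..<CARD('n)}" and J: "J \<subseteq> {..<CARD('n)}"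
    and cardIJ: "card I + card J > CARD('n)"
    and lI: "\<forall>i\<in>I. lam i \<ge> m" and lJ: "\<forall>j\<in>J. lam' j < m"
  shows False
proof -
  define W where "W = u ` ({..<CARD('n)} - I) \<union> u' ` ({..<CARD('n)} - J)"
  have fW: "finite W" by (simp add: W_def)
  have fI: "finite I" using I finite_subset by blast
  have fJ: "finite J" using J finite_subset by blast
  have "card W \<le> card ({..<CARD('n)} - I) + card ({..<CARD('n)} - J)"
    unfolding W_def by (rule order_trans[OF card_Un_le]) (intro add_mono card_image_le; simp)
  also have "\<dots> = (CARD('n) - card I) + (CARD('n) - card J)"
    using I J fI fJ by (simp add: card_Diff_subset)
  moreover have "card I \<le> CARD('n)" using card_mono[OF _ I] by simp
  moreover have "card J \<le> CARD('n)" using card_mono[OF _ J] by simp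
  ultimately have "card W < CARD('n)" using cardIJ by linarith
  moreover have "dim W \<le> card W" by (rule dim_le_card[OF span_superset fW])
  ultimately have dW: "dim W < DIM(real^'n)" by simp
  obtain x :: "real^'n" where x0: "x \<noteq> 0" and xo: "\<And>y. y \<in> span W \<Longrightarrow> orthogonal x y"
    using orthogonal_to_subspace_exists[OF dW] by blast
  have c0: "x \<bullet> u i = 0" if "i < CARD('n)" "i \<notin> I" for i
    using xo[of "u i"] that by (auto simp: W_def orthogonal_def intro: span_base)
  have c0': "x \<bullet> u' i = 0" if "i < CARD('n)" "i \<notin> J" for i
    using xo[of "u' i"] that by (auto simp: W_def orthogonal_def intro: span_base)
  have "m * (norm x)\<^sup>2 = (\<Sum>i<CARD('n). m * (x \<bullet> u i)\<^sup>2)"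
    by (simp add: eig_norm2[OF on] sum_distrib_left)
  also have "\<dots> \<le> (\<Sum>i<CARD('n). lam i * (x \<bullet> u i)\<^sup>2)"
  proof (rule sum_mono)
    fix i assume "i \<in> {..<CARD('n)}"
    then show "m * (x \<bullet> u i)\<^sup>2 \<le> lam i * (x \<bullet> u i)\<^sup>2"
      using lI c0[of i] by (cases "i \<in> I") (auto intro: mult_right_mono)
  qed
  also have "\<dots> = x \<bullet> (A *v x)" by (simp add: eig_quad[OF on ev])
  also have "\<dots> = (\<Sum>i<CARD('n). lam' i * (x \<bullet> u' i)\<^sup>2)" by (simp add: eig_quad[OF on' ev'])
  also have "\<dots> < (\<Sum>i<CARD('n). m * (x \<bullet> u' i)\<^sup>2)"
  proof (rule sum_strict_mono_ex1)
    show "finite {..<CARD('n)}" by simp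
    show "\<forall>i\<in>{..<CARD('n)}. lam' i * (x \<bullet> u' i)\<^sup>2 \<le> m * (x \<bullet> u' i)\<^sup>2"
    proof
      fix i assume "i \<in> {..<CARD('n)}"
      then show "lam' i * (x \<bullet> u' i)\<^sup>2 \<le> m * (x \<bullet> u' i)\<^sup>2"
        using lJ c0'[of i] by (cases "i \<in> J") (auto intro!: mult_right_mono simp: less_imp_le)
    qed
    have "\<exists>j<CARD('n). x \<bullet> u' j \<noteq> 0"
    proof (rule ccontr)
      assume "\<not> ?thesis"
      then have "(norm x)\<^sup>2 = 0" by (simp add: eig_norm2[OF on'])
      then show False using x0 by simp
    qed
    then obtain j where j: "j < CARD('n)" "x \<bullet> u' j \<noteq> 0" by blast
    then have "j \<in> J" using c0' by blast
    then have "lam' j * (x \<bullet> u' j)\<^sup>2 < m * (x \<bullet> u' j)\<^sup>2"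
      using lJ j by (intro mult_strict_right_mono) auto
    then show "\<exists>i\<in>{..<CARD('n)}. lam' i * (x \<bullet> u' i)\<^sup>2 < m * (x \<bullet> u' i)\<^sup>2"
      using j by blast
  qed
  also have "\<dots> = m * (norm x)\<^sup>2"
    by (simp add: eig_norm2[OF on'] sum_distrib_left)
  finally show False by simp
qed

lemma neg_mv: "(- (A::real^'n^'m)) *v x = - (A *v x)"
  by (simp add: vec_eq_iff matrix_vector_mult_def sum_negf)

lemma opnorm_le: "norm ((B::real^'n^'m) *v x) \<le> opnorm B * norm x"
  unfolding opnorm_def by (rule onorm) simp

lemma reflector_norm:
  assumes on: "orthonormal_family k vt"
  shows "norm (reflector k vt *v y) = norm y"
proof -
  define s where "s = (\<Sum>i<k. (vt i \<bullet> y) *\<^sub>R vt i)"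
  have ys: "y \<bullet> s = (\<Sum>i<k. (vt i \<bullet> y)\<^sup>2)"
    by (simp add: s_def inner_sum_right power2_eq_square inner_commute)
  have ss: "s \<bullet> s = (\<Sum>i<k. (vt i \<bullet> y)\<^sup>2)"
    using ortho_norm_sum[OF on, of "\<lambda>i. vt i \<bullet> y"] by (simp add: s_def power2_norm_eq_inner)
  have "(norm (reflector k vt *v y))\<^sup>2 = (y - 2 *\<^sub>R s) \<bullet> (y - 2 *\<^sub>R s)"
    by (simp add: reflector_mv s_def power2_norm_eq_inner)
  also have "\<dots> = y \<bullet> y - 4 * (y \<bullet> s) + 4 * (s \<bullet> s)"
    by (simp add: inner_diff_left inner_diff_right inner_commute[of s y])
  also have "\<dots> = (norm y)\<^sup>2" using ys ss by (simp add: power2_norm_eq_inner)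
  finally show ?thesis by (simp add: power2_eq_iff_nonneg)
qed

lemma refl_lower:
  fixes u :: "nat \<Rightarrow> real^'n"
  assumes on: "orthonormal_family CARD('n) u"
    and ev: "\<forall>i<CARD('n). A *v u i = lam i *\<^sub>R u i"
    and vu: "\<forall>i<k. v i = u i" and kd: "k \<le> CARD('n)"
    and neg: "\<forall>i<k. lam i \<le> - \<mu>" and pos: "\<forall>i. k \<le> i \<and> i < CARD('n) \<longrightarrow> \<mu> \<le> lam i"
  shows "x \<bullet> (reflector k v *v (A *v x)) \<ge> \<mu> * (norm x)\<^sup>2"
proof -
  have ui: "u i \<bullet> (A *v x) = lam i * (x \<bullet> u i)" if "i < CARD('n)" for i
    using ortho_inner_sum[OF on that, of "\<lambda>i. lam i * (x \<bullet> u i)"] by (simp add: eig_mv[OF on ev])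
  have "x \<bullet> (reflector k v *v (A *v x)) = x \<bullet> (A *v x) - 2 * (\<Sum>i<k. (u i \<bullet> (A *v x)) * (x \<bullet> u i))"
    using vu by (simp add: reflector_mv inner_diff_right inner_sum_right)
  also have "(\<Sum>i<k. (u i \<bullet> (A *v x)) * (x \<bullet> u i)) = (\<Sum>i<k. lam i * (x \<bullet> u i)\<^sup>2)"
    using ui kd by (intro sum.cong) (auto simp: power2_eq_square)
  also have "\<dots> = (\<Sum>i<CARD('n). if i < k then lam i * (x \<bullet> u i)\<^sup>2 else 0)"
    using kd by (intro sum.mono_neutral_cong_left) auto
  finally have eq: "x \<bullet> (reflector k v *v (A *v x)) = (\<Sum>i<CARD('n). lam i * (x \<bullet> u i)\<^sup>2 - 2 * (if i < k then lam i * (x \<bullet> u i)\<^sup>2 else 0))"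
    by (simp add: eig_quad[OF on ev] sum_subtractf sum_distrib_left)
  have "\<mu> * (norm x)\<^sup>2 = (\<Sum>i<CARD('n). \<mu> * (x \<bullet> u i)\<^sup>2)"
    by (simp add: eig_norm2[OF on] sum_distrib_left)
  also have "\<dots> \<le> (\<Sum>i<CARD('n). lam i * (x \<bullet> u i)\<^sup>2 - 2 * (if i < k then lam i * (x \<bullet> u i)\<^sup>2 else 0))"
  proof (rule sum_mono)
    fix i assume i: "i \<in> {..<CARD('n)}"
    have sq: "(x \<bullet> u i)\<^sup>2 \<ge> 0" by simp
    show "\<mu> * (x \<bullet> u i)\<^sup>2 \<le> lam i * (x \<bullet> u i)\<^sup>2 - 2 * (if i < k then lam i * (x \<bullet> u i)\<^sup>2 else 0)"
    proof (cases "i < k")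
      case True
      then have "\<mu> * (x \<bullet> u i)\<^sup>2 \<le> (- lam i) * (x \<bullet> u i)\<^sup>2" using neg sq by (intro mult_right_mono) auto
      then show ?thesis using True by simp
    next
      case False
      then have "\<mu> * (x \<bullet> u i)\<^sup>2 \<le> lam i * (x \<bullet> u i)\<^sup>2" using pos sq i by (intro mult_right_mono) auto
      then show ?thesis using False by simp
    qed
  qed
  finally show ?thesis using eq by simp
qed

lemma taylor_bound:
  fixes grad :: "real^'d \<Rightarrow> real^'d" and hess :: "real^'d \<Rightarrow> real^'d^'d" and P :: "real^'d^'d"
  assumes gh: "\<forall>x. (grad has_derivative (\<lambda>h. hess x *v h)) (at x)"
    and lipseg: "\<forall>t. 0 \<le> t \<and> t \<le> 1 \<longrightarrow> opnorm (hess (a + t *\<^sub>R e) - hess (a + e)) \<le> K * (1 - t)"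
    and Pn: "\<forall>y. norm (P *v y) \<le> norm y"
  shows "(P *v (grad (a + e) - hess (a + e) *v e)) \<bullet> e \<ge> (P *v grad a) \<bullet> e - K / 2 * (norm e)\<^sup>2"
proof -
  define H1 where "H1 = hess (a + e)"
  define w where "w = H1 *v e"
  define h where "h = (\<lambda>t. (P *v (grad (a + t *\<^sub>R e) - t *\<^sub>R w)) \<bullet> e + K * (norm e)\<^sup>2 * (t - t\<^sup>2 / 2))"
  have "h 0 \<le> h 1"
  proof (rule DERIV_nonneg_imp_nondecreasing[of 0 1 h])
    fix t :: real assume t: "0 \<le> t" "t \<le> 1"
    define D where "D = (P *v (hess (a + t *\<^sub>R e) *v e - w)) \<bullet> e"
    have d1: "((\<lambda>t. a + t *\<^sub>R e) has_derivative (\<lambda>h. h *\<^sub>R e)) (at t)"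
      by (auto intro!: derivative_eq_intros)
    have d2: "((\<lambda>t. grad (a + t *\<^sub>R e)) has_derivative (\<lambda>h. hess (a + t *\<^sub>R e) *v (h *\<^sub>R e))) (at t)"
      using has_derivative_compose[OF d1 gh[rule_format]] by simp
    have d3: "((\<lambda>t. (P *v (grad (a + t *\<^sub>R e) - t *\<^sub>R w)) \<bullet> e) has_derivative
        (\<lambda>h. (P *v (hess (a + t *\<^sub>R e) *v (h *\<^sub>R e) - h *\<^sub>R w)) \<bullet> e)) (at t)"
      by (auto intro!: derivative_eq_intros d2 bounded_linear.has_derivative[OF matrix_vector_mul_bounded_linear])
    have "(\<lambda>h. (P *v (hess (a + t *\<^sub>R e) *v (h *\<^sub>R e) - h *\<^sub>R w)) \<bullet> e) = (*) D"
      by (rule ext) (simp add: D_def matrix_vector_mult_scaleR matrix_vector_mult_diff_distrib scaleR_right_diff_distrib[symmetric])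
    with d3 have "((\<lambda>t. (P *v (grad (a + t *\<^sub>R e) - t *\<^sub>R w)) \<bullet> e) has_real_derivative D) (at t)"
      by (simp add: has_field_derivative_def)
    then have dh: "(h has_real_derivative D + K * (norm e)\<^sup>2 * (1 - t)) (at t)"
      unfolding h_def by (auto intro!: derivative_eq_intros)
    have "\<bar>D\<bar> \<le> norm (P *v ((hess (a + t *\<^sub>R e) - H1) *v e)) * norm e"
      unfolding D_def w_def by (simp add: matrix_vector_mult_diff_rdistrib Cauchy_Schwarz_ineq2)
    also have "\<dots> \<le> norm ((hess (a + t *\<^sub>R e) - H1) *v e) * norm e"
      using Pn by (intro mult_right_mono) auto
    also have "\<dots> \<le> (opnorm (hess (a + t *\<^sub>R e) - H1) * norm e) * norm e"
      by (intro mult_right_mono opnorm_le) auto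
    also have "\<dots> \<le> (K * (1 - t) * norm e) * norm e"
      using lipseg t unfolding H1_def by (intro mult_right_mono) auto
    finally have "\<bar>D\<bar> \<le> K * (norm e)\<^sup>2 * (1 - t)" by (simp add: power2_eq_square mult_ac)
    then show "\<exists>y. (h has_real_derivative y) (at t) \<and> 0 \<le> y" using dh by (intro exI[of _ "D + K * (norm e)\<^sup>2 * (1 - t)"]) auto
  qed simp
  then show ?thesis by (simp add: h_def w_def H1_def matrix_vector_mult_diff_distrib algebra_simps)
qed

theorem proposition4p17:
  fixes f :: "real^'d \<Rightarrow> real" and grad :: "real^'d \<Rightarrow> real^'d"
    and hess :: "real^'d \<Rightarrow> real^'d^'d"
    and xstar xn :: "real^'d" and k :: nat
    and \<delta> L \<mu> Mlip \<theta> \<alpha> :: real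
    and M :: "'w measure" and G :: "real^'d \<Rightarrow> 'w \<Rightarrow> real^'d"
    and v vt :: "nat \<Rightarrow> real^'d"
  assumes f_grad: "\<forall>x. (f has_derivative (\<lambda>h. grad x \<bullet> h)) (at x)"
    and grad_hess: "\<forall>x. (grad has_derivative (\<lambda>h. hess x *v h)) (at x)"
    and hess_C1: "\<exists>D. (\<forall>x. (hess has_derivative blinfun_apply (D x)) (at x)) \<and> continuous_on UNIV D"
    and k_ge: "1 \<le> k" and k_le: "k \<le> CARD('d) - 1"
    and crit: "grad xstar = 0"
    and \<delta>_pos: "\<delta> > 0" and \<mu>_pos: "0 < \<mu>" and \<mu>_L: "\<mu> < L" and M_pos: "Mlip > 0"
    and spec: "\<forall>x. norm (x - xstar) \<le> \<delta> \<longrightarrow>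
       (\<exists>lam u. sorted_eigensystem (hess x) lam u \<and>
          (\<forall>i<k. - L < lam i \<and> lam i < - \<mu>) \<and>
          (\<forall>i. k \<le> i \<and> i < CARD('d) \<longrightarrow> \<mu> < lam i \<and> lam i < L))"
    and lip: "\<forall>x y. norm (x - xstar) \<le> \<delta> \<and> norm (y - xstar) \<le> \<delta> \<longrightarrow>
       opnorm (hess x - hess y) \<le> Mlip * norm (x - y)"
    and \<theta>_pos: "\<theta> > 0" and C_pos: "Cth \<mu> L \<theta> > 0"
    and \<alpha>_pos: "0 < \<alpha>" and \<alpha>_le: "\<alpha> < 1 / (2 * \<mu>)"
    and P: "prob_space M"
    and unbiased: "\<forall>x. integrable M (G x) \<and> (\<integral>\<omega>. G x \<omega> \<partial>M) = grad x"
    and vt_on: "orthonormal_family k vt"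
    and v_eig: "\<exists>lam u. sorted_eigensystem (hess xn) lam u \<and> (\<forall>i<k. v i = u i)"
    and close: "(opnorm ((\<Sum>i<k. outer (vt i) (vt i)) - (\<Sum>i<k. outer (v i) (v i))))\<^sup>2 \<le> \<theta>"
    and xn_U: "norm (xn - xstar) \<le> min (Cth \<mu> L \<theta> / Mlip) \<delta>"
  shows "(\<forall>\<omega>\<in>space M.
            (1/2) * (norm ((xn - \<alpha> *\<^sub>R (reflector k vt *v G xn \<omega>)) - xstar))\<^sup>2
            \<le> (1 - \<alpha> * Cth \<mu> L \<theta>) * ((1/2) * (norm (xn - xstar))\<^sup>2)
              + \<alpha> * (- ((reflector k vt *v (G xn \<omega> - grad xn)) \<bullet> (xn - xstar)))
              + (1/2) * \<alpha>\<^sup>2 * (norm (G xn \<omega>))\<^sup>2)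
         \<and> integrable M (\<lambda>\<omega>. - ((reflector k vt *v (G xn \<omega> - grad xn)) \<bullet> (xn - xstar)))
         \<and> (\<integral>\<omega>. - ((reflector k vt *v (G xn \<omega> - grad xn)) \<bullet> (xn - xstar)) \<partial>M) = 0"
proof -
  define e where "e = xn - xstar"
  define C where "C = Cth \<mu> L \<theta>"
  define P where "P = reflector k vt"
  define d where "d = CARD('d)"
  have kd: "k < CARD('d)" using k_ge k_le by linarith
  have Cpos: "C > 0" using C_pos by (simp add: C_def)
  have ne_C: "Mlip * norm e \<le> C" using xn_U M_pos by (simp add: e_def C_def field_simps)
  have ne_d: "norm e \<le> \<delta>" using xn_U by (simp add: e_def)
  have Pnorm: "\<forall>y. norm (P *v y) = norm y" using reflector_norm[OF vt_on] by (simp add: P_def)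
  obtain lam' u' where sys': "sorted_eigensystem (hess xn) lam' u'"
      and b1: "\<forall>i<k. - L < lam' i \<and> lam' i < - \<mu>"
      and b2: "\<forall>i. k \<le> i \<and> i < CARD('d) \<longrightarrow> \<mu> < lam' i \<and> lam' i < L"
    using spec ne_d by (auto simp: e_def)
  obtain lam u where sys: "sorted_eigensystem (hess xn) lam u" and vu: "\<forall>i<k. v i = u i"
    using v_eig by blast
  have on: "orthonormal_family CARD('d) u" and ev: "\<forall>i<CARD('d). hess xn *v u i = lam i *\<^sub>R u i"
    and srt: "\<forall>i j. i \<le> j \<and> j < CARD('d) \<longrightarrow> lam i \<le> lam j"
    using sys by (auto simp: sorted_eigensystem_def)
  have on': "orthonormal_family CARD('d) u'" and ev': "\<forall>i<CARD('d). hess xn *v u' i = lam' i *\<^sub>R u' i"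
    using sys' by (auto simp: sorted_eigensystem_def)
  have negA: "\<forall>i<CARD('d). (- hess xn) *v u i = (- lam i) *\<^sub>R u i"
    using ev by (simp add: neg_mv)
  have neg: "\<forall>i<k. lam i \<le> - \<mu>"
  proof -
    have "lam (k - 1) < - \<mu>"
    proof (rule ccontr)
      assume a: "\<not> lam (k - 1) < - \<mu>"
      show False
      proof (rule inertia[OF on ev on' ev', of "{k - 1..<CARD('d)}" "{..<k}" "- \<mu>"])
        show "{k - 1..<CARD('d)} \<subseteq> {..<CARD('d)}" by auto
        show "{..<k} \<subseteq> {..<CARD('d)}" using kd by auto
        show "card {k - 1..<CARD('d)} + card {..<k} > CARD('d)" using kd k_ge by simp
        show "\<forall>j\<in>{..<k}. lam' j < - \<mu>" using b1 by auto
        show "\<forall>i\<in>{k - 1..<CARD('d)}. lam i \<ge> - \<mu>"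
        proof
          fix i assume "i \<in> {k - 1..<CARD('d)}"
          then have "k - 1 \<le> i" "i < CARD('d)" by auto
          then have "lam (k - 1) \<le> lam i" using srt by blast
          then show "lam i \<ge> - \<mu>" using a by linarith
        qed
      qed
    qed
    show ?thesis
    proof (intro allI impI)
      fix i assume "i < k"
      then have "i \<le> k - 1" "k - 1 < CARD('d)" using kd by auto
      then have "lam i \<le> lam (k - 1)" using srt by blast
      then show "lam i \<le> - \<mu>" using \<open>lam (k - 1) < - \<mu>\<close> by simp
    qed
  qed
  have negA': "\<forall>i<CARD('d). (- hess xn) *v u' i = (- lam' i) *\<^sub>R u' i"
    using ev' by (simp add: neg_mv)
  have pos: "\<forall>i. k \<le> i \<and> i < CARD('d) \<longrightarrow> \<mu> \<le> lam i"
  proof -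
    have "\<mu> < lam k"
    proof (rule ccontr)
      assume a: "\<not> \<mu> < lam k"
      show False
      proof (rule inertia[OF on negA on' negA', of "{..<k+1}" "{k..<CARD('d)}" "- \<mu>"])
        show "{..<k+1} \<subseteq> {..<CARD('d)}" using kd by auto
        show "{k..<CARD('d)} \<subseteq> {..<CARD('d)}" by auto
        show "card {..<k+1} + card {k..<CARD('d)} > CARD('d)" using kd by simp
        show "\<forall>j\<in>{k..<CARD('d)}. - lam' j < - \<mu>" using b2 by auto
        show "\<forall>i\<in>{..<k+1}. - lam i \<ge> - \<mu>"
        proof
          fix i assume "i \<in> {..<k+1}"
          then have "i \<le> k" by auto
          then have "lam i \<le> lam k" using srt kd by blast
          then show "- lam i \<ge> - \<mu>" using a by linarith
        qed
      qed
    qed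
    show ?thesis
    proof (intro allI impI)
      fix i assume "k \<le> i \<and> i < CARD('d)"
      then have "lam k \<le> lam i" using srt by blast
      then show "\<mu> \<le> lam i" using \<open>\<mu> < lam k\<close> by simp
    qed
  qed
  have Hn: "norm (hess xn *v y) \<le> L * norm y" for y
  proof -
    have "(norm (hess xn *v y))\<^sup>2 = (\<Sum>i<CARD('d). (lam' i * (y \<bullet> u' i))\<^sup>2)"
      by (rule eig_norm_mv2[OF on' ev'])
    also have "\<dots> \<le> (\<Sum>i<CARD('d). L\<^sup>2 * (y \<bullet> u' i)\<^sup>2)"
    proof (rule sum_mono)
      fix i assume i: "i \<in> {..<CARD('d)}"
      have "- L < lam' i \<and> lam' i < L"
      proof (cases "i < k")
        case True then show ?thesis using b1 \<mu>_pos \<mu>_L by force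
      next
        case False
        then have "\<mu> < lam' i \<and> lam' i < L" using b2 i by auto
        then show ?thesis using \<mu>_pos \<mu>_L by linarith
      qed
      then have "\<bar>lam' i\<bar> \<le> \<bar>L\<bar>" by linarith
      then have "(lam' i)\<^sup>2 \<le> L\<^sup>2" by (simp add: abs_le_square_iff)
      then have "(lam' i)\<^sup>2 * (y \<bullet> u' i)\<^sup>2 \<le> L\<^sup>2 * (y \<bullet> u' i)\<^sup>2"
        by (rule mult_right_mono) simp
      then show "(lam' i * (y \<bullet> u' i))\<^sup>2 \<le> L\<^sup>2 * (y \<bullet> u' i)\<^sup>2"
        by (simp only: power_mult_distrib)
    qed
    also have "\<dots> = L\<^sup>2 * (norm y)\<^sup>2" by (simp only: eig_norm2[OF on', of y] sum_distrib_left)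
    also have "\<dots> = (L * norm y)\<^sup>2" by (simp only: power_mult_distrib)
    finally have "(norm (hess xn *v y))\<^sup>2 \<le> (L * norm y)\<^sup>2" .
    moreover have "0 \<le> L * norm y" using \<mu>_L \<mu>_pos by simp
    ultimately show ?thesis by (rule power2_le_imp_le)
  qed
  have PVlow: "e \<bullet> (reflector k v *v (hess xn *v e)) \<ge> \<mu> * (norm e)\<^sup>2"
    using refl_lower[OF on ev vu _ neg pos] kd by simp
  define Pt where "Pt = (\<Sum>i<k. outer (vt i) (vt i))"
  define Pv where "Pv = (\<Sum>i<k. outer (v i) (v i))"
  have Pdiff: "P - reflector k v = (-2) *\<^sub>R (Pt - Pv)"
    by (simp add: P_def reflector_def Pt_def Pv_def algebra_simps)
  have opn: "opnorm (Pt - Pv) \<le> sqrt \<theta>"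
  proof -
    have "sqrt ((opnorm (Pt - Pv))\<^sup>2) \<le> sqrt \<theta>" using close unfolding Pt_def Pv_def by (rule real_sqrt_le_mono)
    then show ?thesis by simp
  qed
  have Pd: "norm ((P - reflector k v) *v z) \<le> 2 * sqrt \<theta> * norm z" for z
  proof -
    have "(P - reflector k v) *v z = (-2) *\<^sub>R ((Pt - Pv) *v z)"
      by (simp add: Pdiff scaleR_matrix_vector_assoc)
    then have "norm ((P - reflector k v) *v z) = 2 * norm ((Pt - Pv) *v z)" by simp
    also have "\<dots> \<le> 2 * (opnorm (Pt - Pv) * norm z)" using opnorm_le by simp
    also have "\<dots> \<le> 2 * (sqrt \<theta> * norm z)" using opn by (simp add: mult_right_mono)
    finally show ?thesis by simp
  qed
  have PHe: "e \<bullet> (P *v (hess xn *v e)) \<ge> \<mu> * (norm e)\<^sup>2 - 2 * sqrt \<theta> * L * (norm e)\<^sup>2"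
  proof -
    define w where "w = hess xn *v e"
    have split: "e \<bullet> (P *v w) = e \<bullet> (reflector k v *v w) + e \<bullet> ((P - reflector k v) *v w)"
      by (simp add: matrix_vector_mult_diff_rdistrib inner_diff_right)
    have "\<bar>e \<bullet> ((P - reflector k v) *v w)\<bar> \<le> norm e * norm ((P - reflector k v) *v w)"
      by (rule Cauchy_Schwarz_ineq2)
    also have "\<dots> \<le> norm e * (2 * sqrt \<theta> * norm w)" using Pd by (simp add: mult_left_mono)
    also have "\<dots> \<le> norm e * (2 * sqrt \<theta> * (L * norm e))"
      using Hn[of e] \<theta>_pos by (intro mult_left_mono) (auto simp: w_def)
    also have "\<dots> = 2 * sqrt \<theta> * L * (norm e)\<^sup>2" by (simp add: power2_eq_square mult_ac)
    finally show ?thesis using split PVlow by (simp add: w_def)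
  qed
  have xe: "xstar + e = xn" by (simp add: e_def)
  have lipseg: "\<forall>t. 0 \<le> t \<and> t \<le> 1 \<longrightarrow> opnorm (hess (xstar + t *\<^sub>R e) - hess (xstar + e)) \<le> (Mlip * norm e) * (1 - t)"
  proof (intro allI impI)
    fix t :: real assume t: "0 \<le> t \<and> t \<le> 1"
    have "norm (xstar + t *\<^sub>R e - xstar) = t * norm e" using t by simp
    also have "\<dots> \<le> norm e" using t by (simp add: mult_left_le_one_le)
    finally have n1: "norm (xstar + t *\<^sub>R e - xstar) \<le> \<delta>" using ne_d by linarith
    have "xstar + t *\<^sub>R e - xn = (t - 1) *\<^sub>R e" by (simp add: e_def algebra_simps)
    then have n2: "norm (xstar + t *\<^sub>R e - xn) = (1 - t) * norm e" using t by simp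
    have "norm (xn - xstar) \<le> \<delta>" using ne_d by (simp add: e_def)
    then have "opnorm (hess (xstar + t *\<^sub>R e) - hess xn) \<le> Mlip * norm (xstar + t *\<^sub>R e - xn)"
      using lip n1 by blast
    then show "opnorm (hess (xstar + t *\<^sub>R e) - hess (xstar + e)) \<le> (Mlip * norm e) * (1 - t)"
      using n2 xe by (simp add: mult_ac)
  qed
  have Pn': "\<forall>y. norm (P *v y) \<le> norm y" using Pnorm by simp
  have tb: "(P *v (grad xn - hess xn *v e)) \<bullet> e \<ge> - (Mlip * norm e / 2 * (norm e)\<^sup>2)"
    using taylor_bound[OF grad_hess lipseg Pn'] crit xe by simp
  have Cle: "C \<le> \<mu> - 2 * sqrt \<theta> * L"
  proof -
    have "0 \<le> sqrt \<theta> * \<mu>" "0 \<le> L * \<theta>" "0 \<le> L * sqrt \<theta>" using \<theta>_pos \<mu>_pos \<mu>_L by auto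
    then show ?thesis by (simp add: C_def Cth_def algebra_simps)
  qed
  have key: "(P *v grad xn) \<bullet> e \<ge> C / 2 * (norm e)\<^sup>2"
  proof -
    have "(P *v grad xn) \<bullet> e = (P *v (grad xn - hess xn *v e)) \<bullet> e + e \<bullet> (P *v (hess xn *v e))"
      by (simp add: matrix_vector_mult_diff_distrib inner_diff_left inner_commute[of e])
    moreover have "Mlip * norm e / 2 * (norm e)\<^sup>2 \<le> C / 2 * (norm e)\<^sup>2"
      using ne_C by (intro mult_right_mono) auto
    moreover have "C * (norm e)\<^sup>2 \<le> (\<mu> - 2 * sqrt \<theta> * L) * (norm e)\<^sup>2"
      using Cle by (intro mult_right_mono) auto
    ultimately show ?thesis using tb PHe by (simp add: algebra_simps)
  qed
  have keya: "\<alpha> * ((P *v grad xn) \<bullet> e) \<ge> \<alpha> * (C / 2 * (norm e)\<^sup>2)"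
    using key \<alpha>_pos by (intro mult_left_mono) auto
  have ineq: "(1/2) * (norm ((xn - \<alpha> *\<^sub>R (reflector k vt *v G xn \<omega>)) - xstar))\<^sup>2
            \<le> (1 - \<alpha> * Cth \<mu> L \<theta>) * ((1/2) * (norm (xn - xstar))\<^sup>2)
              + \<alpha> * (- ((reflector k vt *v (G xn \<omega> - grad xn)) \<bullet> (xn - xstar)))
              + (1/2) * \<alpha>\<^sup>2 * (norm (G xn \<omega>))\<^sup>2" for \<omega>
  proof -
    define g where "g = G xn \<omega>"
    define a where "a = (P *v grad xn) \<bullet> e"
    define b where "b = (P *v (g - grad xn)) \<bullet> e"
    define pv where "pv = P *v g"
    have eq1: "xn - \<alpha> *\<^sub>R pv - xstar = e - \<alpha> *\<^sub>R pv" by (simp add: e_def algebra_simps)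
    have "(e - \<alpha> *\<^sub>R pv) \<bullet> (e - \<alpha> *\<^sub>R pv) = e \<bullet> e - 2 * \<alpha> * (pv \<bullet> e) + \<alpha>\<^sup>2 * (pv \<bullet> pv)"
      by (simp add: inner_diff_left inner_diff_right inner_commute[of e pv] power2_eq_square algebra_simps)
    then have n1: "(norm ((xn - \<alpha> *\<^sub>R (P *v g)) - xstar))\<^sup>2 = (norm e)\<^sup>2 - 2 * \<alpha> * ((P *v g) \<bullet> e) + \<alpha>\<^sup>2 * (norm (P *v g))\<^sup>2"
      unfolding pv_def[symmetric] eq1 power2_norm_eq_inner by simp
    have n2: "norm (P *v g) = norm g" using Pnorm by simp
    have n3: "(P *v g) \<bullet> e = a + b"
      by (simp add: a_def b_def matrix_vector_mult_diff_distrib inner_diff_left)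
    have L: "(1/2) * (norm ((xn - \<alpha> *\<^sub>R (P *v g)) - xstar))\<^sup>2 = (1/2) * (norm e)\<^sup>2 - \<alpha> * a - \<alpha> * b + (1/2) * \<alpha>\<^sup>2 * (norm g)\<^sup>2"
      unfolding n1 n2 n3 by (simp add: algebra_simps)
    have R: "(1 - \<alpha> * C) * ((1/2) * (norm e)\<^sup>2) + \<alpha> * (- b) + (1/2) * \<alpha>\<^sup>2 * (norm g)\<^sup>2
        = (1/2) * (norm e)\<^sup>2 - \<alpha> * (C / 2 * (norm e)\<^sup>2) - \<alpha> * b + (1/2) * \<alpha>\<^sup>2 * (norm g)\<^sup>2"
      by (simp add: field_simps)
    have "(1/2) * (norm ((xn - \<alpha> *\<^sub>R (P *v g)) - xstar))\<^sup>2 \<le> (1 - \<alpha> * C) * ((1/2) * (norm e)\<^sup>2) + \<alpha> * (- b) + (1/2) * \<alpha>\<^sup>2 * (norm g)\<^sup>2"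
      unfolding L R using keya unfolding a_def by linarith
    then show ?thesis unfolding b_def g_def P_def C_def e_def .
  qed
  have trans: "(P *v z) \<bullet> e = z \<bullet> (transpose P *v e)" for z
    by (metis transpose_transpose transpose_matrix_vector dot_lmul_matrix)
  interpret prob_space M by (rule P)
  define w where "w = transpose P *v e"
  have psi: "(\<lambda>\<omega>. - ((reflector k vt *v (G xn \<omega> - grad xn)) \<bullet> (xn - xstar))) = (\<lambda>\<omega>. grad xn \<bullet> w - G xn \<omega> \<bullet> w)"
    by (rule ext) (simp add: P_def[symmetric] e_def[symmetric] trans w_def inner_diff_left)
  have intG: "integrable M (G xn)" and EG: "(\<integral>\<omega>. G xn \<omega> \<partial>M) = grad xn" using unbiased by auto
  have i1: "integrable M (\<lambda>\<omega>. grad xn \<bullet> w - G xn \<omega> \<bullet> w)"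
    using intG by (intro Bochner_Integration.integrable_diff) auto
  have i2: "(\<integral>\<omega>. grad xn \<bullet> w - G xn \<omega> \<bullet> w \<partial>M) = 0"
    using intG EG by (subst Bochner_Integration.integral_diff) (auto simp: prob_space)
  show ?thesis using ineq psi i1 i2 by simp
qed

end
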